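(* Let $T\subset\mathbb R^2$ be a triangle all of whose interior angles are at least $\omega_0\in(0,\pi/3]$, and set $$c_{inv}^2:=24\cot(\omega_0)\Big(2\cot(\omega_0)-\cot(2\omega_0)+\big((2\cot(\omega_0)-\cot(2\omega_0))^2-3\big)^{1/2}\Big).$$ Then every affine function $p_1$ on $T$ satisfies $\|\nabla p_1\|_{L^2(T)}\le c_{inv}\,h_T^{-1}\|p_1\|_{L^2(T)}$.
   Context: $h_T=\operatorname{diam}(T)$. *)

theory Defs
  imports "HOL-Analysis.Analysis"
begin

definition tri_angle :: "real^2 \<Rightarrow> real^2 \<Rightarrow> real^2 \<Rightarrow> real" where
  "tri_angle a b c = arccos (inner (b - a) (c - a) / (norm (b - a) * norm (c - a)))"

definition c_inv :: "real \<Rightarrow> real" where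
  "c_inv \<omega>0 = sqrt (24 * cot \<omega>0 * (2 * cot \<omega>0 - cot (2 * \<omega>0)
      + sqrt ((2 * cot \<omega>0 - cot (2 * \<omega>0))^2 - 3)))"

end

theory Submission
  imports Defs
begin

lemma core_pos:
  fixes x y t :: real
  assumes t0: "0 \<le> t" and t3: "t \<le> 3" and u0: "1/2 \<le> x"
    and ang: "t * x^2 \<le> y^2" and lng: "x^2 + y^2 \<le> 1"
  shows "y^2 * (3 - t) - t * (3 + (2*x-1)^2) / 4 + t^2/4 \<ge> 0"
proof -
  define u where "u = 2*x - 1"
  have u0': "0 \<le> u" using u0 u_def by simp
  have xu: "x = (1+u)/2" using u_def by simp
  have h1: "y^2 * (3 - t) \<ge> t*(1+u)^2/4 * (3 - t)"
    using ang t3 xu by (intro mult_right_mono) (auto simp: power2_eq_square algebra_simps)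
  have "t*x^2 + x^2 \<le> 1" using ang lng by linarith
  moreover have "(1+u)^2 = 4*x^2" unfolding u_def by (simp add: power2_eq_square algebra_simps)
  ultimately have h2: "(1+u)^2 * (1+t) \<le> 4" by (simp add: algebra_simps)
  have h3: "(3 - t) * (1+u)^2 \<ge> 4*u*(2+u)" using h2 by (simp add: power2_eq_square algebra_simps)
  have h4: "(3-t)*(2+u)*(1+u)^2 \<ge> u*(1+u)^2"
  proof -
    have "(3-t)*(2+u)*(1+u)^2 = ((3 - t) * (1+u)^2)*(2+u)" by simp
    also have "\<dots> \<ge> 4*u*(2+u)*(2+u)" using h3 u0' by (intro mult_right_mono) auto
    finally have f1: "(3-t)*(2+u)*(1+u)^2 \<ge> 4*u*(2+u)*(2+u)" .
    have e1: "4*(2+u)*(2+u) - (1+u)^2 = 3*u^2 + 14*u + 15" by (simp add: power2_eq_square algebra_simps)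
    have "(1+u)^2 \<le> 4*(2+u)*(2+u)" using e1 u0' by (smt (verit) zero_le_power2)
    hence "u*(1+u)^2 \<le> u*(4*(2+u)*(2+u))" using u0' by (rule mult_left_mono)
    moreover have "u*(4*(2+u)*(2+u)) = 4*u*(2+u)*(2+u)" by simp
    ultimately have "4*u*(2+u)*(2+u) \<ge> u*(1+u)^2" by linarith
    then show ?thesis using f1 by linarith
  qed
  have h5: "(3-t)*(2+u) \<ge> u"
  proof -
    have "(1+u)^2 > 0" using u0' by simp
    thus ?thesis using h4 by (metis mult_le_cancel_right_pos)
  qed
  have h6: "(3 - t)*(1+u)^2 - 3 - u^2 + t = u*((3-t)*(2+u) - u)" by (simp add: power2_eq_square algebra_simps)
  have h7: "u*((3-t)*(2+u) - u) \<ge> 0" using h5 u0' by simp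
  have "y^2 * (3 - t) - t * (3 + u^2) / 4 + t^2/4 \<ge> t*(1+u)^2/4 * (3 - t) - t * (3 + u^2) / 4 + t^2/4"
    using h1 by linarith
  also have "t*(1+u)^2/4 * (3 - t) - t * (3 + u^2) / 4 + t^2/4 = t/4 * ((3 - t)*(1+u)^2 - 3 - u^2 + t)"
    by (simp add: power2_eq_square field_simps)
  also have "\<dots> \<ge> 0" using h6 h7 t0 by simp
  finally show ?thesis using u_def by simp
qed

lemma psd2:
  fixes al be de p q :: real
  assumes "0 \<le> al" "0 \<le> de" "be^2 \<le> al * de"
  shows "0 \<le> al*p^2 + 2*be*p*q + de*q^2"
proof (cases "al = 0")
  case True
  then have "be = 0" using assms by simp
  then show ?thesis using True assms by simp
next
  case False
  then have al: "al > 0" using assms by simp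
  have "al * (al*p^2 + 2*be*p*q + de*q^2) = (al*p + be*q)^2 + (al*de - be^2)*q^2"
    by (simp add: power2_eq_square algebra_simps)
  also have "\<dots> \<ge> 0" using assms by simp
  finally show ?thesis using al by (simp add: zero_le_mult_iff)
qed

lemma L1:
  fixes x y t p q :: real
  assumes t0: "0 \<le> t" and t3: "t \<le> 3"
    and a1: "t * x^2 \<le> y^2" and a2: "t * (1-x)^2 \<le> y^2"
    and l1: "x^2 + y^2 \<le> 1" and l2: "(1-x)^2 + y^2 \<le> 1"
  shows "t * (p^2 + q^2) \<le> 2 * (p^2 + (p*x + q*y)^2 + (p*(x-1) + q*y)^2)"
proof -
  define al where "al = 2*(1 + x^2 + (x-1)^2) - t"
  define be where "be = 2*y*(2*x-1)"
  define de where "de = 4*y^2 - t"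
  have "x^2 + (x-1)^2 - 1/2 = 2*(x-1/2)^2" by (simp add: power2_eq_square algebra_simps)
  hence "x^2 + (x-1)^2 \<ge> 1/2" by (smt (verit) zero_le_power2)
  hence alp: "al \<ge> 0" using t3 al_def by simp
  have "2*y^2 \<ge> t*(x^2 + (1-x)^2)" using a1 a2 by (simp add: algebra_simps)
  moreover have "t*(1/2) \<le> t*(x^2 + (1-x)^2)"
    by (rule mult_left_mono) (use \<open>x^2 + (x-1)^2 \<ge> 1/2\<close> t0 in \<open>auto simp: power2_commute\<close>)
  ultimately have dep: "de \<ge> 0" using de_def by simp
  have W: "y^2 * (3 - t) - t * (3 + (2*x-1)^2) / 4 + t^2/4 \<ge> 0"
  proof (cases "x \<ge> 1/2")
    case True show ?thesis using core_pos[OF t0 t3 True a1 l1] .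
  next
    case False
    then have "1/2 \<le> 1 - x" by simp
    from core_pos[OF t0 t3 this a2 l2] show ?thesis by (simp add: power2_eq_square algebra_simps)
  qed
  have "al*de - be^2 = 4*(y^2 * (3 - t)) - t * (3 + (2*x-1)^2) + t^2"
    unfolding al_def be_def de_def by (simp add: power2_eq_square algebra_simps)
  hence det: "be^2 \<le> al*de" using W by simp
  have "0 \<le> al*p^2 + 2*be*p*q + de*q^2" using psd2[OF alp dep det] .
  moreover have "al*p^2 + 2*be*p*q + de*q^2 = 2 * (p^2 + (p*x + q*y)^2 + (p*(x-1) + q*y)^2) - t * (p^2 + q^2)"
    unfolding al_def be_def de_def by (simp add: power2_eq_square algebra_simps)
  ultimately show ?thesis by simp
qed

lemma aux_div:
  fixes C s E Z W :: real
  assumes "C \<noteq> 0" "E \<noteq> 0" "s^2*Z^2 \<le> C^2*W^2"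
  shows "s^2/C^2*(Z/E)^2 \<le> (W/E)^2"
proof -
  have "s^2/C^2*(Z/E)^2 = (s^2*Z^2)/(C^2*E^2)" by (simp add: power_divide)
  also have "\<dots> \<le> (C^2*W^2)/(C^2*E^2)" using assms(3) by (intro divide_right_mono) auto
  also have "\<dots> = (W/E)^2" using assms(1,2) by (simp add: power_divide)
  finally show ?thesis .
qed

lemma L1h:
  fixes C s E X Y p q :: real
  assumes C: "C > 0" and E: "E > 0" and s3: "s^2 \<le> 3*C^2"
    and a1: "s^2*X^2 \<le> C^2*Y^2" and a2: "s^2*(E-X)^2 \<le> C^2*Y^2"
    and l1: "X^2 + Y^2 \<le> E^2" and l2: "(E-X)^2 + Y^2 \<le> E^2"
  shows "s^2*(p^2+q^2) \<le> 2*C^2*(p^2 + ((p*X+q*Y)/E)^2 + ((p*(X-E)+q*Y)/E)^2)"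
proof -
  define t where "t = s^2/C^2"
  define x where "x = X/E"
  define y where "y = Y/E"
  have C2: "C^2 > 0" using C by simp
  have E2: "E^2 > 0" using E by simp
  have t0: "0 \<le> t" unfolding t_def by simp
  have t3: "t \<le> 3" unfolding t_def using s3 C2 by (simp add: divide_le_eq)
  have b1: "t * x^2 \<le> y^2" unfolding t_def x_def y_def using aux_div[OF _ _ a1] C E by simp
  have b2: "t * (1-x)^2 \<le> y^2"
  proof -
    have "1 - x = (E-X)/E" unfolding x_def using E by (simp add: field_simps)
    thus ?thesis unfolding t_def y_def using aux_div[OF _ _ a2] C E by simp
  qed
  have c1: "x^2 + y^2 \<le> 1" unfolding x_def y_def using l1 E2
    by (simp add: power_divide divide_simps)
  have c2: "(1-x)^2 + y^2 \<le> 1"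
  proof -
    have h: "1 - x = (E-X)/E" unfolding x_def using E by (simp add: field_simps)
    show ?thesis unfolding h y_def using l2 E2
      by (simp add: power_divide divide_simps)
  qed
  have m: "t * (p^2 + q^2) \<le> 2 * (p^2 + (p*x + q*y)^2 + (p*(x-1) + q*y)^2)"
    using L1[OF t0 t3 b1 b2 c1 c2] .
  have e1: "p*x + q*y = (p*X+q*Y)/E" unfolding x_def y_def using E by (simp add: field_simps)
  have e2: "p*(x-1) + q*y = (p*(X-E)+q*Y)/E" unfolding x_def y_def using E by (simp add: field_simps)
  have m2: "C^2 * (t * (p^2 + q^2)) \<le> C^2 * (2 * (p^2 + (p*x + q*y)^2 + (p*(x-1) + q*y)^2))"
    using m C2 by simp
  have eq1: "C^2 * (t * (p^2 + q^2)) = s^2*(p^2+q^2)" unfolding t_def using C2 by simp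
  have eq2: "C^2 * (2 * (p^2 + (p*x + q*y)^2 + (p*(x-1) + q*y)^2)) = 2*C^2*(p^2 + ((p*X+q*Y)/E)^2 + ((p*(X-E)+q*Y)/E)^2)"
    unfolding e1 e2 by (simp only: mult.assoc mult.left_commute)
  show ?thesis using m2 eq1 eq2 by linarith
qed

definition cross2 :: "real^2 \<Rightarrow> real^2 \<Rightarrow> real" where
  "cross2 u v = u$1 * v$2 - u$2 * v$1"

lemma inner2: "inner (u::real^2) v = u$1 * v$1 + u$2 * v$2"
  by (simp add: inner_vec_def sum_2)

lemma lagrange2: "(inner u v)^2 + (cross2 u v)^2 = inner u u * inner v v"
  by (simp add: inner2 cross2_def power2_eq_square algebra_simps)

lemma decomp2: "inner u u * inner b f = inner b u * inner u f + cross2 u b * cross2 u f"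
  by (simp add: inner2 cross2_def power2_eq_square algebra_simps)

lemma geom0:
  fixes a b c \<beta> :: "real^2" and C s :: real
  assumes C: "C > 0" and s0: "s \<ge> 0" and Cs: "C^2 + s^2 = 1" and s3: "s^2 \<le> 3*C^2" and ab: "a \<noteq> b"
    and n1: "norm (c-a) \<le> norm (b-a)" and n2: "norm (c-b) \<le> norm (b-a)"
    and angA: "inner (b-a) (c-a) \<le> C * (norm (b-a) * norm (c-a))"
    and angB: "inner (a-b) (c-b) \<le> C * (norm (a-b) * norm (c-b))"
  shows "norm (b-a)^2 * (norm \<beta>)^2 * s^2 \<le> 2*C^2*((inner \<beta> (b-a))^2 + (inner \<beta> (c-b))^2 + (inner \<beta> (a-c))^2)"
proof -
  define e where "e = b - a"
  define f where "f = c - a"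
  define E where "E = inner e e"
  define X where "X = inner e f"
  define Y where "Y = cross2 e f"
  define p where "p = inner \<beta> e"
  define q where "q = cross2 e \<beta>"
  have sC: "s^2 = 1 - C^2" using Cs by linarith
  have E0: "E > 0" unfolding E_def e_def using ab by simp
  have nE: "norm (b-a)^2 = E" unfolding E_def e_def by (simp add: power2_norm_eq_inner)
  have pq: "p^2 + q^2 = E * (norm \<beta>)^2"
    unfolding p_def q_def E_def using lagrange2[of e \<beta>] by (simp add: power2_norm_eq_inner inner_commute)
  have XY: "X^2 + Y^2 = E * inner f f" unfolding X_def Y_def E_def using lagrange2[of e f] by simp
  have bf: "E * inner \<beta> f = p*X + q*Y" unfolding E_def p_def q_def X_def Y_def
    using decomp2[of e \<beta> f] by (simp add: inner_commute)
  have cfe: "cross2 e (f - e) = Y" unfolding Y_def by (simp add: cross2_def algebra_simps)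
  have ife: "inner e (f - e) = X - E" unfolding X_def E_def by (simp add: inner_diff_right)
  have XY2: "(X - E)^2 + Y^2 = E * inner (f-e) (f-e)"
    using lagrange2[of e "f-e"] unfolding cfe ife E_def by simp
  have fe: "f - e = c - b" unfolding f_def e_def by simp
  have ff: "inner f f \<le> E" using n1 unfolding f_def E_def e_def
    by (metis norm_ge_zero power2_norm_eq_inner power_mono)
  have "inner (c-b) (c-b) \<le> inner (b-a) (b-a)" using n2
    by (metis norm_ge_zero power2_norm_eq_inner power_mono)
  moreover have "inner (f-e) (f-e) = inner (c-b) (c-b)" using fe by simp
  moreover have "E = inner (b-a) (b-a)" using E_def e_def by simp
  ultimately have ffe: "inner (f-e) (f-e) \<le> E" by simp
  have ffe2: "inner (f-e) (f-e) = inner f f - 2*X + E" unfolding X_def E_def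
    by (simp add: inner_diff_left inner_diff_right inner_commute)
  have X0: "X \<ge> 0" using ffe ffe2 inner_ge_zero[of f] by linarith
  have l1: "X^2 + Y^2 \<le> E^2" using XY ff E0 by (simp add: power2_eq_square)
  have l2: "(E-X)^2 + Y^2 \<le> E^2"
  proof -
    have "E * inner (f-e) (f-e) \<le> E * E" using ffe E0 by simp
    moreover have "(E-X)^2 = (X-E)^2" by (rule power2_commute)
    moreover have "E^2 = E*E" by (simp add: power2_eq_square)
    ultimately show ?thesis using XY2 by linarith
  qed
  have XE: "X \<le> E"
  proof -
    have "X^2 \<le> E^2" using l1 zero_le_power2[of Y] by linarith
    thus ?thesis using E0 by (smt (verit) power2_le_imp_le less_imp_le)
  qed
  have a1: "s^2*X^2 \<le> C^2*Y^2"
  proof -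
    have "X \<le> C * (norm e * norm f)" using angA unfolding X_def e_def f_def .
    hence "X^2 \<le> (C * (norm e * norm f))^2" using X0 by (rule power_mono)
    also have "\<dots> = C^2 * (E * inner f f)" unfolding E_def
      by (simp add: power_mult_distrib power2_norm_eq_inner)
    finally have "X^2 \<le> C^2 * (X^2 + Y^2)" using XY by simp
    moreover have "s^2*X^2 = X^2 - C^2*X^2" unfolding sC by (simp add: left_diff_distrib)
    moreover have "C^2 * (X^2 + Y^2) = C^2*X^2 + C^2*Y^2" by (simp add: distrib_left)
    ultimately show ?thesis by linarith
  qed
  have a2: "s^2*(E-X)^2 \<le> C^2*Y^2"
  proof -
    have i: "inner (a-b) (c-b) = E - X" unfolding E_def X_def e_def f_def
      by (simp add: inner_diff_left inner_diff_right inner_commute)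
    have n1: "norm e = norm (a-b)" unfolding e_def by (simp add: norm_minus_commute)
    have n2: "norm (f-e) = norm (c-b)" using fe by simp
    have "E - X \<le> C * (norm e * norm (f-e))" using angB unfolding i n1 n2 .
    hence "(E-X)^2 \<le> (C * (norm e * norm (f-e)))^2" using XE by (intro power_mono) auto
    also have "\<dots> = C^2 * (E * inner (f-e) (f-e))" unfolding E_def
      by (simp add: power_mult_distrib power2_norm_eq_inner)
    finally have "(E-X)^2 \<le> C^2 * ((X-E)^2 + Y^2)" using XY2 by simp
    moreover have "s^2*(E-X)^2 = (E-X)^2 - C^2*(E-X)^2" unfolding sC by (simp add: left_diff_distrib)
    moreover have "C^2 * ((X-E)^2 + Y^2) = C^2*(E-X)^2 + C^2*Y^2" by (simp add: distrib_left power2_commute)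
    ultimately show ?thesis by linarith
  qed
  have main: "s^2*(p^2+q^2) \<le> 2*C^2*(p^2 + ((p*X+q*Y)/E)^2 + ((p*(X-E)+q*Y)/E)^2)"
    using L1h[OF C E0 s3 a1 a2 l1 l2] .
  have r1: "(p*X+q*Y)/E = inner \<beta> f" using bf E0 by (simp add: field_simps)
  have r2: "(p*(X-E)+q*Y)/E = inner \<beta> (f - e)"
    using bf E0 unfolding p_def by (simp add: field_simps inner_diff_right)
  have "a - c = - f" unfolding f_def by simp
  hence r3: "(inner \<beta> (a-c))^2 = (inner \<beta> f)^2" by (simp only: inner_minus_right power2_minus)
  show ?thesis using main unfolding r1 r2 pq r3 nE fe
    by (simp add: p_def e_def algebra_simps)
qed

lemma cont_integrable_compact:
  fixes f :: "real^2 \<Rightarrow> real"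
  assumes "compact S" "continuous_on S f"
  shows "f integrable_on S"
proof -
  have "integrable lborel (\<lambda>x. indicator S x *\<^sub>R f x)"
    by (rule borel_integrable_compact[OF assms])
  hence "(\<lambda>x. indicator S x *\<^sub>R f x) integrable_on UNIV"
    using has_integral_integral_lborel by blast
  moreover have "(\<lambda>x. indicator S x *\<^sub>R f x) = (\<lambda>x. if x \<in> S then f x else 0)"
    by (auto simp: indicator_def)
  ultimately show ?thesis using integrable_restrict_UNIV by metis
qed

lemma has_integral_affinity_set:
  fixes f :: "real^2 \<Rightarrow> real"
  assumes f: "(f has_integral i) S" and bS: "bounded S" and m: "m \<noteq> 0"
  shows "((\<lambda>x. f (m *\<^sub>R x + c)) has_integral (1 / \<bar>m\<bar>^2) *\<^sub>R i) ((\<lambda>x. (1/m) *\<^sub>R x + -((1/m) *\<^sub>R c)) ` S)"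
proof -
  obtain r where r: "S \<subseteq> cbox (-r) r" using bounded_subset_cbox_symmetric[OF bS] by blast
  define g where "g = (\<lambda>x. if x \<in> S then f x else 0)"
  have "(g has_integral i) (cbox (-r) r)" unfolding g_def by (rule iffD2[OF has_integral_restrict[OF r] f])
  from has_integral_affinity[OF this m, of c]
  have h: "((\<lambda>x. g (m *\<^sub>R x + c)) has_integral (1 / \<bar>m\<bar>^2) *\<^sub>R i)
            ((\<lambda>x. (1/m) *\<^sub>R x + -((1/m) *\<^sub>R c)) ` cbox (-r) r)" by simp
  define \<psi> where "\<psi> = (\<lambda>x::real^2. (1/m) *\<^sub>R x + -((1/m) *\<^sub>R c))"
  have mem: "m *\<^sub>R x + c \<in> S \<longleftrightarrow> x \<in> \<psi> ` S" for x
  proof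
    assume "m *\<^sub>R x + c \<in> S"
    moreover have "\<psi> (m *\<^sub>R x + c) = x" unfolding \<psi>_def using m by (simp add: algebra_simps)
    ultimately show "x \<in> \<psi> ` S" by (metis image_eqI)
  next
    assume "x \<in> \<psi> ` S"
    then obtain y where "y \<in> S" "x = \<psi> y" by auto
    moreover have "m *\<^sub>R \<psi> y + c = y" unfolding \<psi>_def using m by (simp add: algebra_simps)
    ultimately show "m *\<^sub>R x + c \<in> S" by simp
  qed
  have eqg: "(\<lambda>x. g (m *\<^sub>R x + c)) = (\<lambda>x. if x \<in> \<psi> ` S then f (m *\<^sub>R x + c) else 0)"
    unfolding g_def using mem by auto
  have sub: "\<psi> ` S \<subseteq> \<psi> ` cbox (-r) r" using r by auto
  have h2: "((\<lambda>x. if x \<in> \<psi> ` S then f (m *\<^sub>R x + c) else 0) has_integral (1 / \<bar>m\<bar>^2) *\<^sub>R i) (\<psi> ` cbox (-r) r)"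
    using h unfolding eqg \<psi>_def by simp
  have "((\<lambda>x. f (m *\<^sub>R x + c)) has_integral (1 / \<bar>m\<bar>^2) *\<^sub>R i) (\<psi> ` S)"
    using iffD1[OF has_integral_restrict[OF sub] h2] .
  then show ?thesis unfolding \<psi>_def .
qed

lemma noncol_cross:
  fixes a b c :: "real^2"
  assumes "\<not> collinear {a, b, c}"
  shows "cross2 (b - a) (c - a) \<noteq> 0"
proof
  assume h: "cross2 (b - a) (c - a) = 0"
  define u where "u = b - a"
  define w where "w = c - a"
  have "collinear {0, u, w}"
  proof (cases "u = 0")
    case True then show ?thesis by (simp add: collinear_lemma)
  next
    case False
    have uu: "inner u u \<noteq> 0" using False by simp
    have cw: "u$1 * w$2 - u$2 * w$1 = 0" using h unfolding u_def w_def cross2_def by simp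
    have "w = (inner w u / inner u u) *\<^sub>R u"
    proof -
      have eq: "inner u u *\<^sub>R w = inner w u *\<^sub>R u"
        using cw by (simp add: vec_eq_iff forall_2 inner2 algebra_simps)
      have "w = (1/inner u u) *\<^sub>R (inner u u *\<^sub>R w)" using uu by simp
      also have "\<dots> = (inner w u / inner u u) *\<^sub>R u" unfolding eq by simp
      finally show ?thesis .
    qed
    then show ?thesis by (metis collinear_lemma)
  qed
  moreover have "collinear {a, b, c} \<longleftrightarrow> collinear {0, u, w}"
  proof -
    have "{a, b, c} = {b, a, c}" by auto
    hence "collinear {a, b, c} = collinear {b, a, c}" by simp
    also have "\<dots> = collinear {0, b - a, c - a}" by (rule collinear_3) simp
    finally show ?thesis unfolding u_def w_def .
  qed
  ultimately show False using assms by simp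
qed

definition bary :: "real^2 \<Rightarrow> real^2 \<Rightarrow> real^2 \<Rightarrow> real^2 \<Rightarrow> real" where
  "bary a b c x = cross2 (b - x) (c - x) / cross2 (b - a) (c - a)"

lemma cross_cyc: "cross2 (c - b) (a - b) = cross2 (b - a) (c - a)"
  by (simp add: cross2_def algebra_simps)

lemma bary_eq:
  assumes D: "cross2 (b - a) (c - a) \<noteq> 0" and s: "u + v + w = 1"
  shows "bary a b c (u *\<^sub>R a + v *\<^sub>R b + w *\<^sub>R c) = u"
proof -
  have w: "w = 1 - u - v" using s by simp
  have "cross2 (b - (u *\<^sub>R a + v *\<^sub>R b + w *\<^sub>R c)) (c - (u *\<^sub>R a + v *\<^sub>R b + w *\<^sub>R c))
        = u * cross2 (b - a) (c - a)"
    unfolding w by (simp add: cross2_def algebra_simps)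
  thus ?thesis unfolding bary_def using D by simp
qed

lemma bary3:
  assumes D: "cross2 (b - a) (c - a) \<noteq> 0" and s: "u + v + w = 1"
  shows "bary a b c (u *\<^sub>R a + v *\<^sub>R b + w *\<^sub>R c) = u"
    and "bary b c a (u *\<^sub>R a + v *\<^sub>R b + w *\<^sub>R c) = v"
    and "bary c a b (u *\<^sub>R a + v *\<^sub>R b + w *\<^sub>R c) = w"
proof -
  show "bary a b c (u *\<^sub>R a + v *\<^sub>R b + w *\<^sub>R c) = u" using bary_eq[OF D s] .
  have D2: "cross2 (c - b) (a - b) \<noteq> 0" using D cross_cyc by simp
  have D3: "cross2 (a - c) (b - c) \<noteq> 0" using D cross_cyc[of a c b] cross_cyc[of b a c]
    by (metis cross_cyc)
  have e2: "u *\<^sub>R a + v *\<^sub>R b + w *\<^sub>R c = v *\<^sub>R b + w *\<^sub>R c + u *\<^sub>R a" by simp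
  show "bary b c a (u *\<^sub>R a + v *\<^sub>R b + w *\<^sub>R c) = v"
    unfolding e2 by (rule bary_eq[OF D2]) (use s in simp)
  have e3: "u *\<^sub>R a + v *\<^sub>R b + w *\<^sub>R c = w *\<^sub>R c + u *\<^sub>R a + v *\<^sub>R b" by simp
  show "bary c a b (u *\<^sub>R a + v *\<^sub>R b + w *\<^sub>R c) = w"
    unfolding e3 by (rule bary_eq[OF D3]) (use s in simp)
qed

lemma bary_negligible:
  assumes D: "cross2 (b - a) (c - a) \<noteq> 0" and bc: "b \<noteq> c"
  shows "negligible {x. bary a b c x = r}"
proof -
  define \<gamma> :: "real^2" where "\<gamma> = (\<chi> i. if i = 1 then b$2 - c$2 else c$1 - b$1)"
  have g1: "\<gamma>$1 = b$2 - c$2" and g2: "\<gamma>$2 = c$1 - b$1" unfolding \<gamma>_def by auto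
  have "\<gamma> \<noteq> 0"
  proof
    assume "\<gamma> = 0"
    hence "b$2 = c$2" "b$1 = c$1" using g1 g2 by auto
    hence "b = c" by (simp add: vec_eq_iff forall_2)
    thus False using bc by simp
  qed
  have "{x. bary a b c x = r} = {x. inner \<gamma> x = r * cross2 (b - a) (c - a) - cross2 b c}"
  proof -
    have "cross2 (b - x) (c - x) = cross2 b c + inner \<gamma> x" for x
      by (simp add: cross2_def inner2 g1 g2 algebra_simps)
    thus ?thesis unfolding bary_def using D by (auto simp: field_simps)
  qed
  thus ?thesis using negligible_hyperplane \<open>\<gamma> \<noteq> 0\<close> by metis
qed

lemma memT:
  assumes "0 \<le> u" "0 \<le> v" "0 \<le> w" "u + v + w = 1"
  shows "u *\<^sub>R a + v *\<^sub>R b + w *\<^sub>R c \<in> convex hull {a, b, c}"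
  unfolding convex_hull_3 using assms by blast

lemma subdiv:
  fixes a b c :: "real^2" and f :: "real^2 \<Rightarrow> real"
  assumes nc: "\<not> collinear {a, b, c}" and fc: "continuous_on UNIV f"
  defines "T \<equiv> convex hull {a, b, c}"
  shows "integral T f = (1/4) * (integral T (\<lambda>x. f ((1/2) *\<^sub>R x + (1/2) *\<^sub>R a))
          + integral T (\<lambda>x. f ((1/2) *\<^sub>R x + (1/2) *\<^sub>R b))
          + integral T (\<lambda>x. f ((1/2) *\<^sub>R x + (1/2) *\<^sub>R c))
          + integral T (\<lambda>x. f ((-1/2) *\<^sub>R x + (1/2) *\<^sub>R (a+b+c))))"
proof -
  have D: "cross2 (b - a) (c - a) \<noteq> 0" using noncol_cross[OF nc] .
  have D2: "cross2 (c - b) (a - b) \<noteq> 0" using D cross_cyc by simp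
  have D3: "cross2 (a - c) (b - c) \<noteq> 0" using D by (metis cross_cyc)
  have ab: "a \<noteq> b" and bc: "b \<noteq> c" and ca: "c \<noteq> a" using nc by (auto simp: collinear_2 insert_commute)
  define La where "La = bary a b c"
  define Lb where "Lb = bary b c a"
  define Lc where "Lc = bary c a b"
  define H where "H = {x. La x = 1/2} \<union> {x. Lb x = 1/2} \<union> {x. Lc x = 1/2}"
  have negH: "negligible H" unfolding H_def La_def Lb_def Lc_def
    using bary_negligible[OF D bc, of "1/2"] bary_negligible[OF D2 ca, of "1/2"] bary_negligible[OF D3 ab, of "1/2"]
    by (intro negligible_Un) assumption+
  have Trep: "\<exists>u v w. 0 \<le> u \<and> 0 \<le> v \<and> 0 \<le> w \<and> u + v + w = 1 \<and> x = u *\<^sub>R a + v *\<^sub>R b + w *\<^sub>R c"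
    if "x \<in> T" for x using that unfolding T_def convex_hull_3 by blast
  define \<phi>1 where "\<phi>1 = (\<lambda>x::real^2. (1/2) *\<^sub>R x + (1/2) *\<^sub>R a)"
  define \<phi>2 where "\<phi>2 = (\<lambda>x::real^2. (1/2) *\<^sub>R x + (1/2) *\<^sub>R b)"
  define \<phi>3 where "\<phi>3 = (\<lambda>x::real^2. (1/2) *\<^sub>R x + (1/2) *\<^sub>R c)"
  define \<phi>4 where "\<phi>4 = (\<lambda>x::real^2. (-1/2) *\<^sub>R x + (1/2) *\<^sub>R (a+b+c))"
  define T1 where "T1 = \<phi>1 ` T"
  define T2 where "T2 = \<phi>2 ` T"
  define T3 where "T3 = \<phi>3 ` T"
  define T4 where "T4 = \<phi>4 ` T"
  have LT: "La x + Lb x + Lc x = 1 \<and> 0 \<le> La x \<and> 0 \<le> Lb x \<and> 0 \<le> Lc x" if xT: "x \<in> T" for x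
  proof -
    obtain u v w where "0 \<le> u" "0 \<le> v" "0 \<le> w" "u + v + w = 1" "x = u *\<^sub>R a + v *\<^sub>R b + w *\<^sub>R c"
      using Trep[OF xT] by blast
    thus ?thesis unfolding La_def Lb_def Lc_def using bary3[OF D] by simp
  qed
  have L1: "x \<in> T \<and> La x \<ge> 1/2" if xTk: "x \<in> T1" for x
  proof -
    obtain y where y: "y \<in> T" "x = \<phi>1 y" using xTk T1_def by auto
    obtain u v w where uvw: "0 \<le> u" "0 \<le> v" "0 \<le> w" "u + v + w = 1" "y = u *\<^sub>R a + v *\<^sub>R b + w *\<^sub>R c"
      using Trep[OF y(1)] by blast
    have "x = (1/2 + u/2) *\<^sub>R a + (v/2) *\<^sub>R b + (w/2) *\<^sub>R c"
      unfolding y(2) uvw(5) \<phi>1_def by (simp add: algebra_simps)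
    moreover have s: "(1/2 + u/2) + v/2 + w/2 = 1" using uvw by simp
    ultimately have xe: "x = (1/2 + u/2) *\<^sub>R a + (v/2) *\<^sub>R b + (w/2) *\<^sub>R c" and s: "(1/2 + u/2) + v/2 + w/2 = 1" by auto
    have "x \<in> T" unfolding xe T_def by (rule memT) (use uvw in auto)
    moreover have "La x = 1/2 + u/2" unfolding xe La_def by (rule bary3(1)[OF D s])
    ultimately show ?thesis using uvw by auto
  qed
  have L2: "x \<in> T \<and> Lb x \<ge> 1/2" if xTk: "x \<in> T2" for x
  proof -
    obtain y where y: "y \<in> T" "x = \<phi>2 y" using xTk T2_def by auto
    obtain u v w where uvw: "0 \<le> u" "0 \<le> v" "0 \<le> w" "u + v + w = 1" "y = u *\<^sub>R a + v *\<^sub>R b + w *\<^sub>R c"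
      using Trep[OF y(1)] by blast
    have "x = (u/2) *\<^sub>R a + (1/2 + v/2) *\<^sub>R b + (w/2) *\<^sub>R c"
      unfolding y(2) uvw(5) \<phi>2_def by (simp add: algebra_simps)
    moreover have s: "u/2 + (1/2 + v/2) + w/2 = 1" using uvw by simp
    ultimately have xe: "x = (u/2) *\<^sub>R a + (1/2 + v/2) *\<^sub>R b + (w/2) *\<^sub>R c" and s: "u/2 + (1/2 + v/2) + w/2 = 1" by auto
    have "x \<in> T" unfolding xe T_def by (rule memT) (use uvw in auto)
    moreover have "Lb x = 1/2 + v/2" unfolding xe Lb_def by (rule bary3(2)[OF D s])
    ultimately show ?thesis using uvw by auto
  qed
  have L3: "x \<in> T \<and> Lc x \<ge> 1/2" if xTk: "x \<in> T3" for x
  proof -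
    obtain y where y: "y \<in> T" "x = \<phi>3 y" using xTk T3_def by auto
    obtain u v w where uvw: "0 \<le> u" "0 \<le> v" "0 \<le> w" "u + v + w = 1" "y = u *\<^sub>R a + v *\<^sub>R b + w *\<^sub>R c"
      using Trep[OF y(1)] by blast
    have "x = (u/2) *\<^sub>R a + (v/2) *\<^sub>R b + (1/2 + w/2) *\<^sub>R c"
      unfolding y(2) uvw(5) \<phi>3_def by (simp add: algebra_simps)
    moreover have s: "u/2 + v/2 + (1/2 + w/2) = 1" using uvw by simp
    ultimately have xe: "x = (u/2) *\<^sub>R a + (v/2) *\<^sub>R b + (1/2 + w/2) *\<^sub>R c" and s: "u/2 + v/2 + (1/2 + w/2) = 1" by auto
    have "x \<in> T" unfolding xe T_def by (rule memT) (use uvw in auto)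
    moreover have "Lc x = 1/2 + w/2" unfolding xe Lc_def by (rule bary3(3)[OF D s])
    ultimately show ?thesis using uvw by auto
  qed
  have L4: "x \<in> T \<and> La x \<le> 1/2 \<and> Lb x \<le> 1/2 \<and> Lc x \<le> 1/2" if xTk: "x \<in> T4" for x
  proof -
    obtain y where y: "y \<in> T" "x = \<phi>4 y" using xTk T4_def by auto
    obtain u v w where uvw: "0 \<le> u" "0 \<le> v" "0 \<le> w" "u + v + w = 1" "y = u *\<^sub>R a + v *\<^sub>R b + w *\<^sub>R c"
      using Trep[OF y(1)] by blast
    have "x = (1/2 - u/2) *\<^sub>R a + (1/2 - v/2) *\<^sub>R b + (1/2 - w/2) *\<^sub>R c"
      unfolding y(2) uvw(5) \<phi>4_def by (simp add: algebra_simps)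
    moreover have s: "(1/2 - u/2) + (1/2 - v/2) + (1/2 - w/2) = 1" using uvw by simp
    moreover have "0 \<le> (1/2 - u/2)" "0 \<le> (1/2 - v/2)" "0 \<le> (1/2 - w/2)" using uvw by auto
    ultimately have xe: "x = (1/2 - u/2) *\<^sub>R a + (1/2 - v/2) *\<^sub>R b + (1/2 - w/2) *\<^sub>R c" by auto
    have "x \<in> T" unfolding xe T_def by (rule memT) (use uvw in auto)
    moreover have "La x = 1/2 - u/2" unfolding xe La_def by (rule bary3(1)[OF D s])
    moreover have "Lb x = 1/2 - v/2" unfolding xe Lb_def by (rule bary3(2)[OF D s])
    moreover have "Lc x = 1/2 - w/2" unfolding xe Lc_def by (rule bary3(3)[OF D s])
    ultimately show ?thesis using uvw by auto
  qed
  have cover: "T \<subseteq> T1 \<union> T2 \<union> T3 \<union> T4"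
  proof
    fix x assume "x \<in> T"
    then obtain u v w where uvw: "0 \<le> u" "0 \<le> v" "0 \<le> w" "u + v + w = 1" and x: "x = u *\<^sub>R a + v *\<^sub>R b + w *\<^sub>R c"
      using Trep by blast
    consider "u \<ge> 1/2" | "v \<ge> 1/2" | "w \<ge> 1/2" | "u < 1/2 \<and> v < 1/2 \<and> w < 1/2" by linarith
    then show "x \<in> T1 \<union> T2 \<union> T3 \<union> T4"
    proof cases
      case 1
      have "(2 * u-1) *\<^sub>R a + (2 * v) *\<^sub>R b + (2 * w) *\<^sub>R c \<in> T" unfolding T_def using uvw 1 by (intro memT) auto
      moreover have "x = \<phi>1 ((2 * u-1) *\<^sub>R a + (2 * v) *\<^sub>R b + (2 * w) *\<^sub>R c)" unfolding x \<phi>1_def by (simp add: algebra_simps)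
      ultimately show ?thesis unfolding T1_def by blast
    next
      case 2
      have "(2 * u) *\<^sub>R a + (2 * v-1) *\<^sub>R b + (2 * w) *\<^sub>R c \<in> T" unfolding T_def using uvw 2 by (intro memT) auto
      moreover have "x = \<phi>2 ((2 * u) *\<^sub>R a + (2 * v-1) *\<^sub>R b + (2 * w) *\<^sub>R c)" unfolding x \<phi>2_def by (simp add: algebra_simps)
      ultimately show ?thesis unfolding T2_def by blast
    next
      case 3
      have "(2 * u) *\<^sub>R a + (2 * v) *\<^sub>R b + (2 * w-1) *\<^sub>R c \<in> T" unfolding T_def using uvw 3 by (intro memT) auto
      moreover have "x = \<phi>3 ((2 * u) *\<^sub>R a + (2 * v) *\<^sub>R b + (2 * w-1) *\<^sub>R c)" unfolding x \<phi>3_def by (simp add: algebra_simps)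
      ultimately show ?thesis unfolding T3_def by blast
    next
      case 4
      have "(1-2 * u) *\<^sub>R a + (1-2 * v) *\<^sub>R b + (1-2 * w) *\<^sub>R c \<in> T" unfolding T_def using uvw 4 by (intro memT) auto
      moreover have "x = \<phi>4 ((1-2 * u) *\<^sub>R a + (1-2 * v) *\<^sub>R b + (1-2 * w) *\<^sub>R c)" unfolding x \<phi>4_def by (simp add: algebra_simps)
      ultimately show ?thesis unfolding T4_def by blast
    qed
  qed
  have Teq: "T = T1 \<union> T2 \<union> T3 \<union> T4" using cover L1 L2 L3 L4 by blast
  have i12: "T1 \<inter> T2 \<subseteq> H" unfolding H_def using L1 L2 LT by fastforce
  have i13: "T1 \<inter> T3 \<subseteq> H" unfolding H_def using L1 L3 LT by fastforce
  have i14: "T1 \<inter> T4 \<subseteq> H" unfolding H_def using L1 L4 LT by fastforce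
  have i23: "T2 \<inter> T3 \<subseteq> H" unfolding H_def using L2 L3 LT by fastforce
  have i24: "T2 \<inter> T4 \<subseteq> H" unfolding H_def using L2 L4 LT by fastforce
  have i34: "T3 \<inter> T4 \<subseteq> H" unfolding H_def using L3 L4 LT by fastforce
  have cT: "compact T" unfolding T_def by (intro finite_imp_compact_convex_hull) auto
  have fcs: "continuous_on S f" for S using fc continuous_on_subset by blast
  have aff_cont: "continuous_on UNIV (\<lambda>x::real^2. m *\<^sub>R x + d)" for m d by (intro continuous_intros)
  have cTk: "compact ((\<lambda>x::real^2. m *\<^sub>R x + d) ` T)" for m d
    using compact_continuous_image[OF continuous_on_subset[OF aff_cont] cT] by blast
  have hk: "(f has_integral integral ((\<lambda>x::real^2. m *\<^sub>R x + d) ` T) f) ((\<lambda>x::real^2. m *\<^sub>R x + d) ` T)" for m d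
    using cont_integrable_compact[OF cTk fcs] by (simp add: integrable_integral)
  have bk: "integral T (\<lambda>x. f (m *\<^sub>R x + d)) = 4 * integral ((\<lambda>x::real^2. m *\<^sub>R x + d) ` T) f"
    if hm: "\<bar>m\<bar> = 1/2" for m d
  proof -
    have m0: "m \<noteq> 0" using hm by auto
    have bd: "bounded ((\<lambda>x::real^2. m *\<^sub>R x + d) ` T)" using cTk compact_imp_bounded by blast
    from has_integral_affinity_set[OF hk bd m0, of d]
    have "((\<lambda>x. f (m *\<^sub>R x + d)) has_integral 4 * integral ((\<lambda>x::real^2. m *\<^sub>R x + d) ` T) f)
           ((\<lambda>x. (1/m) *\<^sub>R x + -((1/m) *\<^sub>R d)) ` (\<lambda>x::real^2. m *\<^sub>R x + d) ` T)"
      using hm by (simp add: power2_eq_square)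
    moreover have "(\<lambda>x. (1/m) *\<^sub>R x + -((1/m) *\<^sub>R d)) ` (\<lambda>x::real^2. m *\<^sub>R x + d) ` T = T"
      unfolding image_image using m0 by (simp add: algebra_simps)
    ultimately show ?thesis by (simp add: integral_unique)
  qed
  define i1 where "i1 = integral T1 f"
  define i2 where "i2 = integral T2 f"
  define i3 where "i3 = integral T3 f"
  define i4 where "i4 = integral T4 f"
  have h1: "(f has_integral i1) T1" unfolding i1_def T1_def \<phi>1_def by (rule hk)
  have h2: "(f has_integral i2) T2" unfolding i2_def T2_def \<phi>2_def by (rule hk)
  have h3: "(f has_integral i3) T3" unfolding i3_def T3_def \<phi>3_def by (rule hk)
  have h4: "(f has_integral i4) T4" unfolding i4_def T4_def \<phi>4_def by (rule hk)
  have u12: "(f has_integral (i1 + i2)) (T1 \<union> T2)"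
    by (rule has_integral_Un[OF h1 h2 negligible_subset[OF negH i12]])
  have n3: "negligible ((T1 \<union> T2) \<inter> T3)" using i13 i23
    by (intro negligible_subset[OF negH]) auto
  have u123: "(f has_integral (i1 + i2 + i3)) (T1 \<union> T2 \<union> T3)" by (rule has_integral_Un[OF u12 h3 n3])
  have n4: "negligible ((T1 \<union> T2 \<union> T3) \<inter> T4)" using i14 i24 i34
    by (intro negligible_subset[OF negH]) auto
  have "(f has_integral (i1 + i2 + i3 + i4)) (T1 \<union> T2 \<union> T3 \<union> T4)" by (rule has_integral_Un[OF u123 h4 n4])
  hence tot: "integral T f = i1 + i2 + i3 + i4" using Teq by (simp add: integral_unique)
  have b1: "integral T (\<lambda>x. f ((1/2) *\<^sub>R x + (1/2) *\<^sub>R a)) = 4 * i1" unfolding i1_def T1_def \<phi>1_def by (rule bk) simp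
  have b2: "integral T (\<lambda>x. f ((1/2) *\<^sub>R x + (1/2) *\<^sub>R b)) = 4 * i2" unfolding i2_def T2_def \<phi>2_def by (rule bk) simp
  have b3: "integral T (\<lambda>x. f ((1/2) *\<^sub>R x + (1/2) *\<^sub>R c)) = 4 * i3" unfolding i3_def T3_def \<phi>3_def by (rule bk) simp
  have b4: "integral T (\<lambda>x. f ((-1/2) *\<^sub>R x + (1/2) *\<^sub>R (a+b+c))) = 4 * i4" unfolding i4_def T4_def \<phi>4_def by (rule bk) simp
  show ?thesis unfolding b1 b2 b3 b4 tot by simp
qed

lemma quad_int:
  fixes \<gamma> :: "real^2" and T :: "(real^2) set"
  assumes cT: "compact T"
  shows "integral T (\<lambda>x. k1 * (inner \<gamma> x)^2 + k2 * inner \<gamma> x + k3)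
       = k1 * integral T (\<lambda>x. (inner \<gamma> x)^2) + k2 * integral T (\<lambda>x. inner \<gamma> x) + k3 * integral T (\<lambda>x. 1)"
proof -
  have i1: "(\<lambda>x. (inner \<gamma> x)^2) integrable_on T"
    by (rule cont_integrable_compact[OF cT]) (intro continuous_intros)
  have i2: "(\<lambda>x. inner \<gamma> x) integrable_on T"
    by (rule cont_integrable_compact[OF cT]) (intro continuous_intros)
  have i3: "(\<lambda>x. 1::real) integrable_on T"
    by (rule cont_integrable_compact[OF cT]) (intro continuous_intros)
  have "((\<lambda>x. k1 * (inner \<gamma> x)^2 + k2 * inner \<gamma> x + k3) has_integral
         (k1 * integral T (\<lambda>x. (inner \<gamma> x)^2) + k2 * integral T (\<lambda>x. inner \<gamma> x) + k3 * integral T (\<lambda>x. 1))) T"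
  proof -
    have a: "((\<lambda>x. k1 * (inner \<gamma> x)^2) has_integral k1 * integral T (\<lambda>x. (inner \<gamma> x)^2)) T"
      using has_integral_mult_right[OF integrable_integral[OF i1]] by simp
    have b: "((\<lambda>x. k2 * inner \<gamma> x) has_integral k2 * integral T (\<lambda>x. inner \<gamma> x)) T"
      using has_integral_mult_right[OF integrable_integral[OF i2]] by simp
    have c: "((\<lambda>x. k3 * 1) has_integral k3 * integral T (\<lambda>x. 1)) T"
      using has_integral_mult_right[OF integrable_integral[OF i3]] by simp
    show ?thesis using has_integral_add[OF has_integral_add[OF a b] c] by simp
  qed
  thus ?thesis by (rule integral_unique)
qed

lemma moments:
  fixes a b c \<gamma> :: "real^2" and k :: real
  assumes nc: "\<not> collinear {a, b, c}"
  defines "T \<equiv> convex hull {a, b, c}"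
  shows "integral T (\<lambda>x. (inner \<gamma> x + k)^2) = integral T (\<lambda>x. 1) / 12 *
     ((inner \<gamma> a + k)^2 + (inner \<gamma> b + k)^2 + (inner \<gamma> c + k)^2 + (inner \<gamma> a + inner \<gamma> b + inner \<gamma> c + 3*k)^2)"
proof -
  have cT: "compact T" unfolding T_def by (intro finite_imp_compact_convex_hull) auto
  define A where "A = integral T (\<lambda>x. 1::real)"
  define I1 where "I1 = integral T (\<lambda>x. inner \<gamma> x)"
  define I2 where "I2 = integral T (\<lambda>x. (inner \<gamma> x)^2)"
  define qa where "qa = inner \<gamma> a"
  define qb where "qb = inner \<gamma> b"
  define qc where "qc = inner \<gamma> c"
  have Q: "integral T (\<lambda>x. k1 * (inner \<gamma> x)^2 + k2 * inner \<gamma> x + k3) = k1 * I2 + k2 * I1 + k3 * A" for k1 k2 k3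
    unfolding I1_def I2_def A_def by (rule quad_int[OF cT])
  have s1: "integral T (\<lambda>x. inner \<gamma> x) = (1/4) * (integral T (\<lambda>x. inner \<gamma> ((1/2) *\<^sub>R x + (1/2) *\<^sub>R a))
          + integral T (\<lambda>x. inner \<gamma> ((1/2) *\<^sub>R x + (1/2) *\<^sub>R b))
          + integral T (\<lambda>x. inner \<gamma> ((1/2) *\<^sub>R x + (1/2) *\<^sub>R c))
          + integral T (\<lambda>x. inner \<gamma> ((-1/2) *\<^sub>R x + (1/2) *\<^sub>R (a+b+c))))"
    unfolding T_def by (rule subdiv[OF nc]) (intro continuous_intros)
  have r1: "(\<lambda>x. inner \<gamma> ((m::real) *\<^sub>R x + (1/2) *\<^sub>R d)) = (\<lambda>x. 0 * (inner \<gamma> x)^2 + m * inner \<gamma> x + inner \<gamma> d / 2)" for m d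
    by (simp add: inner_add_right)
  have "I1 = (1/4) * ((1/2 * I1 + qa/2 * A) + (1/2 * I1 + qb/2 * A) + (1/2 * I1 + qc/2 * A) + (-1/2 * I1 + (qa+qb+qc)/2 * A))"
  proof -
    have e: "integral T (\<lambda>x. inner \<gamma> ((m::real) *\<^sub>R x + (1/2) *\<^sub>R d)) = m * I1 + inner \<gamma> d / 2 * A" for m d
      unfolding r1 Q by simp
    have e4: "inner \<gamma> (a+b+c) = qa + qb + qc" unfolding qa_def qb_def qc_def by (simp add: inner_add_right)
    show ?thesis using s1 unfolding e I1_def[symmetric] e4 qa_def[symmetric] qb_def[symmetric] qc_def[symmetric] by (simp only: mult_1 mult_minus_left)
  qed
  hence I1v: "I1 = A * (qa + qb + qc) / 3" by (simp add: field_simps)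
  have s2: "integral T (\<lambda>x. (inner \<gamma> x)^2) = (1/4) * (integral T (\<lambda>x. (inner \<gamma> ((1/2) *\<^sub>R x + (1/2) *\<^sub>R a))^2)
          + integral T (\<lambda>x. (inner \<gamma> ((1/2) *\<^sub>R x + (1/2) *\<^sub>R b))^2)
          + integral T (\<lambda>x. (inner \<gamma> ((1/2) *\<^sub>R x + (1/2) *\<^sub>R c))^2)
          + integral T (\<lambda>x. (inner \<gamma> ((-1/2) *\<^sub>R x + (1/2) *\<^sub>R (a+b+c)))^2))"
    unfolding T_def by (rule subdiv[OF nc, where f="\<lambda>x. (inner \<gamma> x)^2"]) (intro continuous_intros)
  have r2: "(\<lambda>x. (inner \<gamma> ((m::real) *\<^sub>R x + (1/2) *\<^sub>R d))^2) = (\<lambda>x. (m*m) * (inner \<gamma> x)^2 + (m * inner \<gamma> d) * inner \<gamma> x + (inner \<gamma> d)^2 / 4)" for m d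
    by (simp add: inner_add_right power2_eq_square algebra_simps)
  have I2v: "I2 = A * (qa^2 + qb^2 + qc^2 + (qa+qb+qc)^2) / 12"
  proof -
    have e: "integral T (\<lambda>x. (inner \<gamma> ((m::real) *\<^sub>R x + (1/2) *\<^sub>R d))^2) = (m*m) * I2 + (m * inner \<gamma> d) * I1 + (inner \<gamma> d)^2 / 4 * A" for m d
      unfolding r2 Q by simp
    have e4: "inner \<gamma> (a+b+c) = qa + qb + qc" unfolding qa_def qb_def qc_def by (simp add: inner_add_right)
    show ?thesis using s2 unfolding e I2_def[symmetric] e4 qa_def[symmetric] qb_def[symmetric] qc_def[symmetric]
      by (simp add: field_simps)
  qed
  have r3: "(\<lambda>x. (inner \<gamma> x + k)^2) = (\<lambda>x. 1 * (inner \<gamma> x)^2 + (2*k) * inner \<gamma> x + k^2)"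
    by (simp add: power2_eq_square algebra_simps)
  have "integral T (\<lambda>x. (inner \<gamma> x + k)^2) = I2 + 2*k*I1 + k^2*A" unfolding r3 Q by simp
  also have "\<dots> = A / 12 * ((qa + k)^2 + (qb + k)^2 + (qc + k)^2 + (qa + qb + qc + 3*k)^2)"
    unfolding I1v I2v by (simp add: power2_eq_square field_simps)
  finally show ?thesis unfolding A_def qa_def qb_def qc_def .
qed

lemma cinv_eq:
  assumes w0: "0 < \<omega>0" and w1: "\<omega>0 \<le> pi / 3"
  shows "c_inv \<omega>0 = sqrt (72 * (cos \<omega>0 / sin \<omega>0)^2)"
proof -
  define C where "C = cos \<omega>0"
  define s where "s = sin \<omega>0"
  have s0: "s > 0" unfolding s_def using w0 w1 by (intro sin_gt_zero) auto
  have "cos (pi/3) \<le> cos \<omega>0" using w0 w1 by (intro cos_monotone_0_pi_le) auto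
  hence C12: "C \<ge> 1/2" unfolding C_def by (simp add: cos_60)
  have Cs: "C^2 + s^2 = 1" unfolding C_def s_def by simp
  have C0: "C > 0" using C12 by simp
  have K: "2 * cot \<omega>0 - cot (2 * \<omega>0) = (3*C^2 + s^2) / (2 * s * C)"
    unfolding cot_def sin_double cos_double C_def[symmetric] s_def[symmetric]
    using s0 C0 by (simp add: field_simps power2_eq_square)
  have K2: "((3*C^2 + s^2) / (2 * s * C))^2 - 3 = ((3*C^2 - s^2) / (2 * s * C))^2"
    using s0 C0 by (simp add: field_simps power2_eq_square)
  have pos: "3*C^2 - s^2 \<ge> 0"
  proof -
    have "(1/2)^2 \<le> C^2" using C12 by (intro power_mono) auto
    hence "C^2 \<ge> 1/4" by (simp add: power2_eq_square)
    thus ?thesis using Cs by linarith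
  qed
  have sq: "sqrt (((3*C^2 - s^2) / (2 * s * C))^2) = (3*C^2 - s^2) / (2 * s * C)"
    using pos s0 C0 by simp
  have "24 * cot \<omega>0 * (2 * cot \<omega>0 - cot (2 * \<omega>0) + sqrt ((2 * cot \<omega>0 - cot (2 * \<omega>0))^2 - 3))
        = 72 * (C / s)^2"
    unfolding K K2 sq unfolding cot_def C_def[symmetric] s_def[symmetric]
    using s0 C0 by (simp add: field_simps power2_eq_square)
  thus ?thesis unfolding c_inv_def C_def s_def by simp
qed

lemma ang_conv:
  fixes u v :: "real^2"
  assumes u: "u \<noteq> 0" and v: "v \<noteq> 0" and w0: "0 \<le> \<omega>" and wp: "\<omega> \<le> pi"
    and h: "arccos (inner u v / (norm u * norm v)) \<ge> \<omega>"
  shows "inner u v \<le> cos \<omega> * (norm u * norm v)"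
proof -
  define z where "z = inner u v / (norm u * norm v)"
  have nn: "norm u * norm v > 0" using u v by simp
  have "\<bar>inner u v\<bar> \<le> norm u * norm v" by (rule Cauchy_Schwarz_ineq2)
  hence z1: "-1 \<le> z" "z \<le> 1" unfolding z_def using nn by (auto simp: abs_le_iff divide_le_eq le_divide_eq)
  have "cos (arccos z) \<le> cos \<omega>"
    using h w0 z1 unfolding z_def[symmetric] by (intro cos_monotone_0_pi_le) (auto intro: arccos_ubound)
  hence "z \<le> cos \<omega>" using z1 by (simp add: cos_arccos)
  thus ?thesis unfolding z_def using nn by (simp add: divide_le_eq mult.commute)
qed

lemma tri_cos:
  fixes a b c :: "real^2"
  assumes "b \<noteq> a" "c \<noteq> a" "0 \<le> \<omega>" "\<omega> \<le> pi" "tri_angle a b c \<ge> \<omega>"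
  shows "inner (b - a) (c - a) \<le> cos \<omega> * (norm (b - a) * norm (c - a))"
  using ang_conv[of "b - a" "c - a" \<omega>] assms unfolding tri_angle_def by simp

lemma diam_le:
  fixes a b c :: "real^2"
  assumes M: "norm (b-a) \<le> M" "norm (c-b) \<le> M" "norm (a-c) \<le> M"
  shows "diameter (convex hull {a, b, c}) \<le> M"
proof (rule diameter_le)
  have M0: "0 \<le> M" using M(1) norm_ge_zero order_trans by blast
  show "convex hull {a, b, c} \<noteq> {} \<or> 0 \<le> M" using M0 by simp
  have vx: "dist v x \<le> M" if v: "v \<in> {a,b,c}" and x: "x \<in> convex hull {a,b,c}" for v x
  proof -
    have "{a,b,c} \<subseteq> cball v M" using v M M0
      by (auto simp: dist_norm norm_minus_commute)
    hence "convex hull {a,b,c} \<subseteq> cball v M" by (intro hull_minimal) auto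
    thus ?thesis using x by auto
  qed
  fix x y assume x: "x \<in> convex hull {a,b,c}" and y: "y \<in> convex hull {a,b,c}"
  have "{a,b,c} \<subseteq> cball x M" using vx[OF _ x] by (auto simp: dist_commute)
  hence "convex hull {a,b,c} \<subseteq> cball x M" by (intro hull_minimal) auto
  thus "norm (x - y) \<le> M" using y by (auto simp: dist_norm)
qed

lemma trig_facts:
  assumes w0: "0 < \<omega>0" and w1: "\<omega>0 \<le> pi / 3"
  shows "sin \<omega>0 > 0" "cos \<omega>0 > 0" "(sin \<omega>0)^2 \<le> 3 * (cos \<omega>0)^2"
proof -
  show "sin \<omega>0 > 0" using w0 w1 by (intro sin_gt_zero) auto
  have "cos (pi/3) \<le> cos \<omega>0" using w0 w1 by (intro cos_monotone_0_pi_le) auto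
  hence C12: "cos \<omega>0 \<ge> 1/2" by (simp add: cos_60)
  thus "cos \<omega>0 > 0" by simp
  have "(1/2)^2 \<le> (cos \<omega>0)^2" using C12 by (intro power_mono) auto
  hence "(cos \<omega>0)^2 \<ge> 1/4" by (simp add: power2_eq_square)
  moreover have "(sin \<omega>0)^2 = 1 - (cos \<omega>0)^2" by (simp add: sin_squared_eq)
  ultimately show "(sin \<omega>0)^2 \<le> 3 * (cos \<omega>0)^2" by linarith
qed

theorem lemma4p4:
  fixes a b c :: "real^2" and \<omega>0 :: real and \<beta> :: "real^2" and k :: real
    and p :: "real^2 \<Rightarrow> real"
  assumes "\<not> collinear {a, b, c}"
    and "0 < \<omega>0" and "\<omega>0 \<le> pi / 3"
    and "tri_angle a b c \<ge> \<omega>0" and "tri_angle b c a \<ge> \<omega>0" and "tri_angle c a b \<ge> \<omega>0"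
    and "\<And>x. p x = inner \<beta> x + k"
  shows "sqrt (integral (convex hull {a, b, c}) (\<lambda>x. (norm \<beta>)\<^sup>2))
           \<le> c_inv \<omega>0 * inverse (diameter (convex hull {a, b, c}))
              * sqrt (integral (convex hull {a, b, c}) (\<lambda>x. (p x)\<^sup>2))"
proof -
  note nc = assms(1) and w0 = assms(2) and w1 = assms(3)
  define T where "T = convex hull {a, b, c}"
  define C where "C = cos \<omega>0"
  define s where "s = sin \<omega>0"
  have s0: "s > 0" and C0: "C > 0" and s3: "s^2 \<le> 3*C^2"
    using trig_facts[OF w0 w1] unfolding C_def s_def by auto
  have Cs: "C^2 + s^2 = 1" unfolding C_def s_def by simp
  have wpi: "0 \<le> \<omega>0" "\<omega>0 \<le> pi" using w0 w1 by auto
  have ab: "a \<noteq> b" and bc: "b \<noteq> c" and ca: "c \<noteq> a" using nc by (auto simp: collinear_2 insert_commute)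
  have A1: "inner (b-a) (c-a) \<le> C * (norm (b-a) * norm (c-a))"
    unfolding C_def using tri_cos[OF _ _ wpi assms(4)] ab ca by auto
  have A2: "inner (c-b) (a-b) \<le> C * (norm (c-b) * norm (a-b))"
    unfolding C_def using tri_cos[OF _ _ wpi assms(5)] ab bc by auto
  have A3: "inner (a-c) (b-c) \<le> C * (norm (a-c) * norm (b-c))"
    unfolding C_def using tri_cos[OF _ _ wpi assms(6)] bc ca by auto
  define E3 where "E3 = (inner \<beta> (b-a))^2 + (inner \<beta> (c-b))^2 + (inner \<beta> (a-c))^2"
  have Cs0: "s \<ge> 0" using s0 by simp
  have G1: "norm (b-a)^2 * (norm \<beta>)^2 * s^2 \<le> 2*C^2*E3"
    if "norm (c-b) \<le> norm (b-a)" "norm (a-c) \<le> norm (b-a)"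
  proof -
    have n1: "norm (c-a) \<le> norm (b-a)" using that by (simp add: norm_minus_commute)
    have aB: "inner (a-b) (c-b) \<le> C * (norm (a-b) * norm (c-b))" using A2 by (simp add: inner_commute mult.commute)
    show ?thesis unfolding E3_def using geom0[OF C0 Cs0 Cs s3 ab n1 that(1) A1 aB] .
  qed
  have G2: "norm (c-b)^2 * (norm \<beta>)^2 * s^2 \<le> 2*C^2*E3"
    if "norm (b-a) \<le> norm (c-b)" "norm (a-c) \<le> norm (c-b)"
  proof -
    have n1: "norm (a-b) \<le> norm (c-b)" using that by (simp add: norm_minus_commute)
    have aB: "inner (b-c) (a-c) \<le> C * (norm (b-c) * norm (a-c))" using A3 by (simp add: inner_commute mult.commute)
    have "norm (c-b)^2 * (norm \<beta>)^2 * s^2 \<le> 2*C^2*((inner \<beta> (c-b))^2 + (inner \<beta> (a-c))^2 + (inner \<beta> (b-a))^2)"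
      using geom0[OF C0 Cs0 Cs s3 bc n1 that(2) A2 aB] .
    thus ?thesis unfolding E3_def by (simp add: ac_simps)
  qed
  have G3: "norm (a-c)^2 * (norm \<beta>)^2 * s^2 \<le> 2*C^2*E3"
    if "norm (b-a) \<le> norm (a-c)" "norm (c-b) \<le> norm (a-c)"
  proof -
    have n1: "norm (b-c) \<le> norm (a-c)" using that by (simp add: norm_minus_commute)
    have aB: "inner (c-a) (b-a) \<le> C * (norm (c-a) * norm (b-a))" using A1 by (simp add: inner_commute mult.commute)
    have "norm (a-c)^2 * (norm \<beta>)^2 * s^2 \<le> 2*C^2*((inner \<beta> (a-c))^2 + (inner \<beta> (b-a))^2 + (inner \<beta> (c-b))^2)"
      using geom0[OF C0 Cs0 Cs s3 ca n1 that(1) A3 aB] .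
    thus ?thesis unfolding E3_def by (simp add: ac_simps)
  qed
  define M where "M = max (norm (b-a)) (max (norm (c-b)) (norm (a-c)))"
  have GM: "M^2 * (norm \<beta>)^2 * s^2 \<le> 2*C^2*E3"
  proof (cases "norm (c-b) \<le> norm (b-a) \<and> norm (a-c) \<le> norm (b-a)")
    case True
    hence "M = norm (b-a)" unfolding M_def by simp
    thus ?thesis using G1 True by simp
  next
    case F1: False
    show ?thesis
    proof (cases "norm (a-c) \<le> norm (c-b)")
      case True
      hence "M = norm (c-b)" "norm (b-a) \<le> norm (c-b)" using F1 unfolding M_def by auto
      thus ?thesis using G2 True by simp
    next
      case False
      hence "M = norm (a-c)" "norm (b-a) \<le> norm (a-c)" "norm (c-b) \<le> norm (a-c)" using F1 unfolding M_def by auto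
      thus ?thesis using G3 by simp
    qed
  qed
  define h where "h = diameter T"
  have hM: "h \<le> M" unfolding h_def T_def by (rule diam_le) (auto simp: M_def)
  have cT: "compact T" unfolding T_def by (intro finite_imp_compact_convex_hull) auto
  have "dist a b \<le> h" unfolding h_def
    by (rule diameter_bounded_bound) (auto simp: T_def hull_inc compact_imp_bounded[OF cT[unfolded T_def]])
  hence h0: "h > 0" using ab by (metis dist_pos_lt order_less_le_trans)
  define A where "A = integral T (\<lambda>x. 1::real)"
  have A0: "A \<ge> 0" unfolding A_def
    by (rule integral_nonneg) (auto intro: cont_integrable_compact[OF cT] continuous_intros)
  have pe: "(\<lambda>x. (p x)^2) = (\<lambda>x. (inner \<beta> x + k)^2)" using assms(7) by auto
  define pa where "pa = inner \<beta> a + k"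
  define pb where "pb = inner \<beta> b + k"
  define pc where "pc = inner \<beta> c + k"
  define P where "P = integral T (\<lambda>x. (p x)^2)"
  have Pv: "P = A / 12 * (pa^2 + pb^2 + pc^2 + (pa + pb + pc)^2)"
    unfolding P_def pe A_def T_def pa_def pb_def pc_def using moments[OF nc, of \<beta> k] by (simp add: algebra_simps)
  define L where "L = integral T (\<lambda>x. (norm \<beta>)^2)"
  have Lv: "L = (norm \<beta>)^2 * A"
  proof -
    have "(\<lambda>x::real^2. (norm \<beta>)^2) = (\<lambda>x. 0 * (inner \<beta> x)^2 + 0 * inner \<beta> x + (norm \<beta>)^2)" by simp
    thus ?thesis unfolding L_def A_def using quad_int[OF cT, of 0 \<beta> 0 "(norm \<beta>)^2"] by simp
  qed
  have E3p: "E3 = (pb - pa)^2 + (pc - pb)^2 + (pa - pc)^2"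
    unfolding E3_def pa_def pb_def pc_def by (simp add: inner_diff_right)
  have sq: "pa^2 + pb^2 + pc^2 + (pa + pb + pc)^2 - E3/3 = 4/3 * (pa+pb+pc)^2"
    unfolding E3p by (simp add: power2_eq_square field_simps)
  have "0 \<le> 4/3 * (pa+pb+pc)^2" by simp
  hence Q: "E3/3 \<le> pa^2 + pb^2 + pc^2 + (pa + pb + pc)^2" using sq by linarith
  have "A/12 * (E3/3) \<le> A/12 * (pa^2 + pb^2 + pc^2 + (pa + pb + pc)^2)"
    by (rule mult_left_mono) (use Q A0 in auto)
  hence PE: "P \<ge> A * E3 / 36" unfolding Pv by simp
  have hM2: "h^2 \<le> M^2" using hM h0 by (intro power_mono) auto
  have key: "(norm \<beta>)^2 * s^2 * h^2 \<le> 2*C^2*E3"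
  proof -
    have "(norm \<beta>)^2 * s^2 * h^2 \<le> (norm \<beta>)^2 * s^2 * M^2"
      using hM2 by (intro mult_left_mono) auto
    thus ?thesis using GM by (simp add: ac_simps)
  qed
  define cc where "cc = c_inv \<omega>0"
  have ccv: "cc = sqrt 72 * (C / s)" unfolding cc_def cinv_eq[OF w0 w1] C_def[symmetric] s_def[symmetric]
    using s0 C0 by (simp add: real_sqrt_mult)
  have cc0: "cc \<ge> 0" using ccv s0 C0 by simp
  have fac2: "(cc * inverse h)^2 = 72 * C^2 / (s^2 * h^2)"
    unfolding ccv using s0 h0 by (simp add: power_mult_distrib power_divide field_simps)
  have LP: "L \<le> (cc * inverse h)^2 * P"
  proof -
    have "(cc * inverse h)^2 * P \<ge> 72 * C^2 / (s^2 * h^2) * (A * E3 / 36)"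
      unfolding fac2 using PE s0 h0 by (intro mult_left_mono) auto
    moreover have "72 * C^2 / (s^2 * h^2) * (A * E3 / 36) = A * (2*C^2*E3) / (s^2*h^2)"
      using s0 h0 by (simp add: field_simps)
    moreover have "A * (2*C^2*E3) / (s^2*h^2) \<ge> A * ((norm \<beta>)^2 * s^2 * h^2) / (s^2*h^2)"
      using key A0 s0 h0 by (intro divide_right_mono mult_left_mono) auto
    moreover have "A * ((norm \<beta>)^2 * s^2 * h^2) / (s^2*h^2) = L"
      unfolding Lv using s0 h0 by (simp add: field_simps)
    ultimately show ?thesis by linarith
  qed
  have "sqrt L \<le> sqrt ((cc * inverse h)^2 * P)" using LP by (rule real_sqrt_le_mono)
  also have "\<dots> = cc * inverse h * sqrt P"
    using cc0 h0 by (simp add: real_sqrt_mult)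
  finally show ?thesis unfolding L_def P_def cc_def h_def T_def .
qed

end
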